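(* Let $K\subseteq\mathbb R^2$ be a compact set containing no array on three points and let $\delta>0$. There exists $n_0\in\mathbb N$ such that for all $n\ge n_0$ the graphs $\Gamma^n_{\mathrm{hor}}$ and $\Gamma^n_{\mathrm{vert}}$ are disjoint (they have no common vertex).
   Context: An array on three points is a triple $a_1,a_2,a_3$ of points in the plane with $a_1\ne a_2$, $a_2\ne a_3$, such that the segments $[a_1;a_2]$ and $[a_2;a_3]$ are each parallel to a coordinate axis and are mutually orthogonal. Let $p(x,y)=x$, $q(x,y)=y$. For $n\in\mathbb N$ the graph $\Gamma^n$ has vertex set all lattice points $(i/2^n,j/2^n)$, $i,j\in\mathbb Z$, such that the square $[i/2^n;(i+1)/2^n)\times[j/2^n;(j+1)/2^n)$ meets $K$, and edges all two-element sets $\{u_1,u_2\}$ of vertices with $|p(u_1)-p(u_2)|\le 1/2^n$ or $|q(u_1)-q(u_2)|\le 1/2^n$. An edge $u_1u_2$ is vertical if $|p(u_1)-p(u_2)|\le 1/2^n$ and horizontal if $|q(u_1)-q(u_2)|\le 1/2^n$ (an edge may be both). It is long if the Euclidean distance $|u_1-u_2|\ge\delta$ and short if $|u_1-u_2|<\delta$. $\Gamma^n_{\mathrm{hor}}$ is the subgraph of $\Gamma^n$ formed by all long horizontal edges and their endpoints; $\Gamma^n_{\mathrm{vert}}$ is the subgraph formed by all long vertical edges and their endpoints. *)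

theory Defs
  imports "HOL-Analysis.Analysis"
begin

text \<open>Points of the plane are pairs of reals; p = fst, q = snd. The product metric
  on real \<times> real is the Euclidean distance.\<close>

definition is_array3 :: "real \<times> real \<Rightarrow> real \<times> real \<Rightarrow> real \<times> real \<Rightarrow> bool" where
  "is_array3 a1 a2 a3 \<longleftrightarrow> a1 \<noteq> a2 \<and> a2 \<noteq> a3 \<and>
     ((snd a1 = snd a2 \<and> fst a2 = fst a3) \<or> (fst a1 = fst a2 \<and> snd a2 = snd a3))"

definition grid_vertices :: "(real \<times> real) set \<Rightarrow> nat \<Rightarrow> (real \<times> real) set" where
  "grid_vertices K n = {(of_int i / 2^n, of_int j / 2^n) | i j :: int.
      ({of_int i / 2^n ..< (of_int i + 1) / 2^n} \<times> {of_int j / 2^n ..< (of_int j + 1) / 2^n}) \<inter> K \<noteq> {}}"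

definition grid_edges :: "(real \<times> real) set \<Rightarrow> nat \<Rightarrow> (real \<times> real) set set" where
  "grid_edges K n = {{u1, u2} | u1 u2. u1 \<in> grid_vertices K n \<and> u2 \<in> grid_vertices K n \<and> u1 \<noteq> u2 \<and>
      (\<bar>fst u1 - fst u2\<bar> \<le> 1 / 2^n \<or> \<bar>snd u1 - snd u2\<bar> \<le> 1 / 2^n)}"

definition long_hor_edges :: "(real \<times> real) set \<Rightarrow> real \<Rightarrow> nat \<Rightarrow> (real \<times> real) set set" where
  "long_hor_edges K \<delta> n = {{u1, u2} | u1 u2. {u1, u2} \<in> grid_edges K n \<and>
      \<bar>snd u1 - snd u2\<bar> \<le> 1 / 2^n \<and> dist u1 u2 \<ge> \<delta>}"

definition long_vert_edges :: "(real \<times> real) set \<Rightarrow> real \<Rightarrow> nat \<Rightarrow> (real \<times> real) set set" where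
  "long_vert_edges K \<delta> n = {{u1, u2} | u1 u2. {u1, u2} \<in> grid_edges K n \<and>
      \<bar>fst u1 - fst u2\<bar> \<le> 1 / 2^n \<and> dist u1 u2 \<ge> \<delta>}"

definition Gamma_hor_vertices :: "(real \<times> real) set \<Rightarrow> real \<Rightarrow> nat \<Rightarrow> (real \<times> real) set" where
  "Gamma_hor_vertices K \<delta> n = \<Union> (long_hor_edges K \<delta> n)"

definition Gamma_vert_vertices :: "(real \<times> real) set \<Rightarrow> real \<Rightarrow> nat \<Rightarrow> (real \<times> real) set" where
  "Gamma_vert_vertices K \<delta> n = \<Union> (long_vert_edges K \<delta> n)"

end

theory Submission
  imports Defs
begin

lemma dist_le_sum: "dist (a::real\<times>real) b \<le> \<bar>fst a - fst b\<bar> + \<bar>snd a - snd b\<bar>"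
proof -
  have "dist a b = sqrt ((fst a - fst b)^2 + (snd a - snd b)^2)"
    by (metis dist_Pair_Pair dist_real_def prod.collapse real_sqrt_abs2 power2_abs)
  also have "\<dots> \<le> \<bar>fst a - fst b\<bar> + \<bar>snd a - snd b\<bar>"
    by (rule real_le_lsqrt) (auto simp: power2_eq_square algebra_simps)
  finally show ?thesis .
qed

lemma vertex_near:
  assumes "u \<in> grid_vertices K n"
  shows "\<exists>a\<in>K. \<bar>fst a - fst u\<bar> \<le> 1/2^n \<and> \<bar>snd a - snd u\<bar> \<le> 1/2^n"
proof -
  obtain i j :: int where u: "u = (of_int i / 2^n, of_int j / 2^n)"
    and ne: "({of_int i / 2^n ..< (of_int i + 1) / 2^n} \<times> {of_int j / 2^n ..< (of_int j + 1) / 2^n}) \<inter> K \<noteq> {}"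
    using assms unfolding grid_vertices_def by blast
  then obtain a where a0: "a \<in> K" "a \<in> {of_int i / 2^n ..< (of_int i + 1) / 2^n} \<times> {of_int j / 2^n ..< (of_int j + 1) / 2^n}"
    by blast
  then have a: "a \<in> K" "fst a \<in> {of_int i / 2^n ..< (of_int i + 1) / 2^n}"
     "snd a \<in> {of_int j / 2^n ..< (of_int j + 1) / 2^n}" by (auto simp only: mem_Times_iff)
  have e: "(of_int k + 1) / (2::real)^n = of_int k / 2^n + 1/2^n" for k :: int
    by (simp add: add_divide_distrib)
  have f1: "of_int i / 2^n \<le> fst a" "fst a < of_int i / 2^n + 1/2^n"
    using a(2) e[of i] by auto
  have f2: "of_int j / 2^n \<le> snd a" "snd a < of_int j / 2^n + 1/2^n"
    using a(3) e[of j] by auto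
  have "fst u = of_int i / 2^n" "snd u = of_int j / 2^n" using u by auto
  then have "\<bar>fst a - fst u\<bar> \<le> 1/2^n \<and> \<bar>snd a - snd u\<bar> \<le> 1/2^n"
    using f1 f2 by linarith
  then show ?thesis using a(1) by blast
qed

lemma hor_ex:
  assumes "x \<in> Gamma_hor_vertices K \<delta> n"
  shows "\<exists>v. x \<in> grid_vertices K n \<and> v \<in> grid_vertices K n \<and> \<bar>snd x - snd v\<bar> \<le> 1/2^n \<and> dist x v \<ge> \<delta>"
  using assms unfolding Gamma_hor_vertices_def long_hor_edges_def grid_edges_def
  apply (auto simp: doubleton_eq_iff)
  by (metis abs_minus_commute dist_commute)+

lemma vert_ex:
  assumes "x \<in> Gamma_vert_vertices K \<delta> n"
  shows "\<exists>v. x \<in> grid_vertices K n \<and> v \<in> grid_vertices K n \<and> \<bar>fst x - fst v\<bar> \<le> 1/2^n \<and> dist x v \<ge> \<delta>"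
  using assms unfolding Gamma_vert_vertices_def long_vert_edges_def grid_edges_def
  apply (auto simp: doubleton_eq_iff)
  by (metis abs_minus_commute dist_commute)+


theorem mainTheorem3:
  fixes K :: "(real \<times> real) set" and \<delta> :: real
  assumes "compact K"
    and "\<not> (\<exists>a1\<in>K. \<exists>a2\<in>K. \<exists>a3\<in>K. is_array3 a1 a2 a3)"
    and "\<delta> > 0"
  shows "\<exists>n0::nat. \<forall>n\<ge>n0. Gamma_hor_vertices K \<delta> n \<inter> Gamma_vert_vertices K \<delta> n = {}"
proof -
  define f :: "(real\<times>real) \<times> (real\<times>real) \<times> (real\<times>real) \<Rightarrow> real" where
    "f = (\<lambda>(a,b,c). \<bar>snd a - snd b\<bar> + \<bar>fst a - fst c\<bar> + max 0 (\<delta> - dist a b) + max 0 (\<delta> - dist a c))"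
  have cpt: "compact (K \<times> K \<times> K)" using assms(1) by (intro compact_Times)
  have cont: "continuous_on (K \<times> K \<times> K) f"
    unfolding f_def case_prod_unfold by (intro continuous_intros)
  have pos: "f t > 0" if "t \<in> K \<times> K \<times> K" for t
  proof -
    obtain a b c where t: "t = (a,b,c)" by (cases t) auto
    have abc: "a \<in> K" "b \<in> K" "c \<in> K" using that t by auto
    have nn: "\<bar>snd a - snd b\<bar> \<ge> 0" "\<bar>fst a - fst c\<bar> \<ge> 0" "max 0 (\<delta> - dist a b) \<ge> 0" "max 0 (\<delta> - dist a c) \<ge> 0"
      by auto
    show ?thesis
    proof (rule ccontr)
      assume "\<not> f t > 0"
      then have "f t \<le> 0" by simp
      moreover have "f t = \<bar>snd a - snd b\<bar> + \<bar>fst a - fst c\<bar> + max 0 (\<delta> - dist a b) + max 0 (\<delta> - dist a c)"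
        by (simp add: f_def t)
      ultimately have z: "\<bar>snd a - snd b\<bar> = 0" "\<bar>fst a - fst c\<bar> = 0" "max 0 (\<delta> - dist a b) = 0" "max 0 (\<delta> - dist a c) = 0"
        using nn by linarith+
      then have "dist a b \<ge> \<delta>" "dist a c \<ge> \<delta>" using z(3,4) max.cobounded2[of 0 "\<delta> - dist a b"] max.cobounded2[of 0 "\<delta> - dist a c"] by linarith+
      then have "b \<noteq> a" "a \<noteq> c" using assms(3) by auto
      then have "is_array3 b a c" using z unfolding is_array3_def by auto
      then show False using assms(2) abc by blast
    qed
  qed
  have ne_or: "K \<times> K \<times> K = {} \<or> (\<exists>m>0. \<forall>t\<in>K \<times> K \<times> K. f t \<ge> m)"
  proof (cases "K \<times> K \<times> K = {}")
    case False
    from continuous_attains_inf[OF cpt False cont] obtain t0 where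
      "t0 \<in> K \<times> K \<times> K" "\<forall>t\<in>K \<times> K \<times> K. f t0 \<le> f t" by blast
    then show ?thesis using pos by (intro disjI2 exI[of _ "f t0"]) auto
  qed simp
  then obtain m where m: "m > 0" "\<forall>t\<in>K \<times> K \<times> K. f t \<ge> m"
  proof
    assume "K \<times> K \<times> K = {}" "\<And>m. 0 < m \<Longrightarrow> \<forall>t\<in>K \<times> K \<times> K. m \<le> f t \<Longrightarrow> thesis"
    then show thesis by (metis empty_iff zero_less_one)
  qed blast
  obtain n0 where n0: "(1/2::real)^n0 < m/14"
    using real_arch_pow_inv[of "m/14" "1/2::real"] m(1) by auto
  show ?thesis
  proof (intro exI[of _ n0] allI impI)
    fix n :: nat assume "n \<ge> n0"
    define h :: real where "h = 1/2^n"
    have hpos: "h > 0" unfolding h_def by simp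
    have "(1/2::real)^n \<le> (1/2)^n0" using \<open>n \<ge> n0\<close> by (intro power_decreasing) auto
    then have hm: "14 * h < m" using n0 unfolding h_def by (simp add: power_one_over)
    show "Gamma_hor_vertices K \<delta> n \<inter> Gamma_vert_vertices K \<delta> n = {}"
    proof (rule ccontr)
      assume "Gamma_hor_vertices K \<delta> n \<inter> Gamma_vert_vertices K \<delta> n \<noteq> {}"
      then obtain x where x: "x \<in> Gamma_hor_vertices K \<delta> n" "x \<in> Gamma_vert_vertices K \<delta> n" by blast
      obtain v where v: "x \<in> grid_vertices K n" "v \<in> grid_vertices K n" "\<bar>snd x - snd v\<bar> \<le> h" "dist x v \<ge> \<delta>"
        using hor_ex[OF x(1)] unfolding h_def by blast
      obtain w where w: "w \<in> grid_vertices K n" "\<bar>fst x - fst w\<bar> \<le> h" "dist x w \<ge> \<delta>"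
        using vert_ex[OF x(2)] unfolding h_def by blast
      obtain a where a: "a \<in> K" "\<bar>fst a - fst x\<bar> \<le> h" "\<bar>snd a - snd x\<bar> \<le> h"
        using vertex_near[OF v(1)] unfolding h_def by blast
      obtain b where b: "b \<in> K" "\<bar>fst b - fst v\<bar> \<le> h" "\<bar>snd b - snd v\<bar> \<le> h"
        using vertex_near[OF v(2)] unfolding h_def by blast
      obtain c where c: "c \<in> K" "\<bar>fst c - fst w\<bar> \<le> h" "\<bar>snd c - snd w\<bar> \<le> h"
        using vertex_near[OF w(1)] unfolding h_def by blast
      have d1: "dist a x \<le> 2*h" using dist_le_sum[of a x] a by linarith
      have d2: "dist b v \<le> 2*h" using dist_le_sum[of b v] b by linarith
      have d3: "dist c w \<le> 2*h" using dist_le_sum[of c w] c by linarith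
      have "dist x v \<le> dist x a + dist a b + dist b v" using dist_triangle[of x v a] dist_triangle[of a v b] by linarith
      then have ab: "\<delta> - dist a b \<le> 4*h" using d1 d2 v(4) by (simp add: dist_commute)
      have "dist x w \<le> dist x a + dist a c + dist c w" using dist_triangle[of x w a] dist_triangle[of a w c] by linarith
      then have ac: "\<delta> - dist a c \<le> 4*h" using d1 d3 w(3) by (simp add: dist_commute)
      have s1: "\<bar>snd a - snd b\<bar> \<le> 3*h" using a b v(3) by linarith
      have s2: "\<bar>fst a - fst c\<bar> \<le> 3*h" using a c w(2) by linarith
      have m1: "max 0 (\<delta> - dist a b) \<le> 4*h" "max 0 (\<delta> - dist a c) \<le> 4*h" using ab ac hpos by auto
      have "f (a,b,c) = \<bar>snd a - snd b\<bar> + \<bar>fst a - fst c\<bar> + max 0 (\<delta> - dist a b) + max 0 (\<delta> - dist a c)"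
        by (simp add: f_def)
      then have "f (a,b,c) \<le> 14*h" using m1 s1 s2 by linarith
      moreover have "f (a,b,c) \<ge> m" using m(2) a(1) b(1) c(1) by blast
      ultimately show False using hm by linarith
    qed
  qed
qed

end
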